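(* For every integer $m \geq 1$, let $\mathrm{Cay}(\sigma_m)$ and $\mathrm{Cay}(\tau_m)$ be the Cayley graphs (defined in the context) of the Boolean functions $\sigma_m, \tau_m : \mathbb{Z}_2^{2m} \to \mathbb{Z}_2$. Then $\mathrm{Cay}(\sigma_m)$ and $\mathrm{Cay}(\tau_m)$ are isomorphic (as simple graphs) if and only if $m \in \{1,2,3\}$.
   Context: Identify $\mathbb{Z}_2^{2m}$ with the integers $0,\dots,4^m-1$ via binary representation, so each $i \in \mathbb{Z}_2^{2m}$ has a base-4 representation with $m$ digits (each base-4 digit being a consecutive pair of bits). Define $\sigma_m(i)=1$ if and only if the number of base-4 digits of $i$ equal to $1$ is odd, and $\sigma_m(i)=0$ otherwise. Define $\tau_m(i)=1$ if and only if the number of base-4 digits of $i$ equal to $1$ or $2$ is nonzero and the number of base-4 digits of $i$ equal to $1$ is even, and $\tau_m(i)=0$ otherwise. For $f:\mathbb{Z}_2^{2m}\to\mathbb{Z}_2$ with $f(0)=0$, the Cayley graph $\mathrm{Cay}(f)$ is the simple undirected graph with vertex set $\mathbb{Z}_2^{2m}$ in which distinct $i,j$ are adjacent if and only if $f(i+j)=1$ (addition in $\mathbb{Z}_2^{2m}$). *)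

theory Defs
  imports Main
begin

text \<open>Z_2^{2m} identified with {0..<4^m}; addition is bitwise xor. Z_2 is bool.\<close>

definition vertices :: "nat \<Rightarrow> nat set" where
  "vertices m = {0..<4 ^ m}"

definition digit4 :: "nat \<Rightarrow> nat \<Rightarrow> nat" where
  "digit4 i k = (i div 4 ^ k) mod 4"

definition count_digits :: "nat \<Rightarrow> nat set \<Rightarrow> nat \<Rightarrow> nat" where
  "count_digits m D i = card {k. k < m \<and> digit4 i k \<in> D}"

definition sigma :: "nat \<Rightarrow> nat \<Rightarrow> bool" where
  "sigma m i = odd (count_digits m {1} i)"

definition tau :: "nat \<Rightarrow> nat \<Rightarrow> bool" where
  "tau m i = (count_digits m {1, 2} i \<noteq> 0 \<and> even (count_digits m {1} i))"

definition cay_adj :: "(nat \<Rightarrow> bool) \<Rightarrow> nat \<Rightarrow> nat \<Rightarrow> bool" where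
  "cay_adj f i j = (i \<noteq> j \<and> f (Bit_Operations.xor i j))"

definition graph_iso :: "nat set \<Rightarrow> (nat \<Rightarrow> nat \<Rightarrow> bool) \<Rightarrow> nat set \<Rightarrow> (nat \<Rightarrow> nat \<Rightarrow> bool) \<Rightarrow> bool" where
  "graph_iso V E W F = (\<exists>h. bij_betw h V W \<and> (\<forall>i\<in>V. \<forall>j\<in>V. E i j \<longleftrightarrow> F (h i) (h j)))"

end

theory Submission
  imports Defs
begin


lemma xor_lt: "x < 2 ^ n \<Longrightarrow> y < 2 ^ n \<Longrightarrow> xor x y < (2::nat) ^ n"
proof -
  assume a: "x < 2 ^ n" "y < 2 ^ n"
  have "take_bit n x = x" "take_bit n y = y"
    using a by (simp_all add: take_bit_nat_eq_self_iff)
  hence "take_bit n (xor x y) = xor x y" by simp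
  moreover have "take_bit n (xor x y) < 2 ^ n" by (rule take_bit_nat_less_exp)
  ultimately show ?thesis by simp
qed

lemma xor_lt4: "x < 4 ^ m \<Longrightarrow> y < 4 ^ m \<Longrightarrow> xor x y < (4::nat) ^ m"
  using xor_lt[of x "2*m" y] by (simp add: power_mult)

lemma digit4_bits: "digit4 x k = take_bit 2 (drop_bit (2*k) x)"
  by (simp add: digit4_def take_bit_eq_mod drop_bit_eq_div power_mult)

lemma digit4_xor: "digit4 (xor x y) k = xor (digit4 x k) (digit4 y k)"
  by (simp add: digit4_bits)

lemma digit4_lt: "digit4 x k < 4"
  by (simp add: digit4_def)

lemma digit4_0[simp]: "digit4 0 k = 0"
  by (simp add: digit4_def)

lemma count_Suc: "count_digits (Suc m) D x = count_digits m D x + of_bool (digit4 x m \<in> D)"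
proof -
  have "{k. k < Suc m \<and> digit4 x k \<in> D} = {k. k < m \<and> digit4 x k \<in> D} \<union> (if digit4 x m \<in> D then {m} else {})"
    by (auto simp: less_Suc_eq)
  thus ?thesis unfolding count_digits_def by auto
qed

lemma count_0[simp]: "count_digits m D 0 = (if 0 \<in> D then m else 0)"
  by (simp add: count_digits_def)

lemma sigma0[simp]: "sigma m 0 = False" by (simp add: sigma_def)
lemma tau0[simp]: "tau m 0 = False" by (simp add: tau_def)

lemma cay_eq: "f 0 = False \<Longrightarrow> cay_adj f i j = f (xor i j)"
  by (auto simp: cay_adj_def)

lemma digit_cases: "(d::nat) < 4 \<Longrightarrow> d = 0 \<or> d = 1 \<or> d = 2 \<or> d = 3" by auto

lemma loc: "a < 4 \<Longrightarrow> b < 4 \<Longrightarrow> c < 4 \<Longrightarrow>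
  even (of_bool (xor (xor a b) c = 1) + of_bool (xor a b = 1) + of_bool (xor a c = 1)
      + of_bool (xor b c = 1) + of_bool (a = 1) + of_bool (b = 1) + of_bool ((c::nat) = 1) :: nat)"
  apply (drule digit_cases)+
  apply (elim disjE)
  by simp_all

lemma sig_even: "even (count_digits m {1} (xor (xor a b) c) + count_digits m {1} (xor a b)
   + count_digits m {1} (xor a c) + count_digits m {1} (xor b c) + count_digits m {1} a
   + count_digits m {1} b + count_digits m {1} c)"
proof (induction m)
  case 0 then show ?case by (simp add: count_digits_def)
next
  case (Suc m)
  have "even (of_bool (xor (xor (digit4 a m) (digit4 b m)) (digit4 c m) = 1) + of_bool (xor (digit4 a m) (digit4 b m) = 1) + of_bool (xor (digit4 a m) (digit4 c m) = 1)
      + of_bool (xor (digit4 b m) (digit4 c m) = 1) + of_bool (digit4 a m = 1) + of_bool (digit4 b m = 1) + of_bool (digit4 c m = 1) :: nat)"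
    by (rule loc) (simp_all add: digit4_lt)
  moreover have "count_digits (Suc m) {1} (xor (xor a b) c) + count_digits (Suc m) {1} (xor a b)
   + count_digits (Suc m) {1} (xor a c) + count_digits (Suc m) {1} (xor b c) + count_digits (Suc m) {1} a
   + count_digits (Suc m) {1} b + count_digits (Suc m) {1} c =
    (count_digits m {1} (xor (xor a b) c) + count_digits m {1} (xor a b)
   + count_digits m {1} (xor a c) + count_digits m {1} (xor b c) + count_digits m {1} a
   + count_digits m {1} b + count_digits m {1} c) +
   (of_bool (xor (xor (digit4 a m) (digit4 b m)) (digit4 c m) = 1) + of_bool (xor (digit4 a m) (digit4 b m) = 1) + of_bool (xor (digit4 a m) (digit4 c m) = 1)
      + of_bool (xor (digit4 b m) (digit4 c m) = 1) + of_bool (digit4 a m = 1) + of_bool (digit4 b m = 1) + of_bool (digit4 c m = 1))"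
    by (simp add: count_Suc digit4_xor ac_simps)
  ultimately show ?case using Suc.IH by simp
qed

lemma par7: "even (a+b+c+d+e+f+g::nat) \<Longrightarrow> odd a = (odd b \<noteq> (odd c \<noteq> (odd d \<noteq> (odd e \<noteq> (odd f \<noteq> odd g)))))"
  by (simp add: even_add) argo

lemma sig_quad: "sigma m (xor (xor a b) c) = (sigma m (xor a b) \<noteq> (sigma m (xor a c) \<noteq> (sigma m (xor b c) \<noteq> (sigma m a \<noteq> (sigma m b \<noteq> sigma m c)))))"
  using par7[OF sig_even[of m a b c]] unfolding sigma_def .



definition P3 :: "nat set \<Rightarrow> (nat \<Rightarrow> nat \<Rightarrow> bool) \<Rightarrow> bool" where
  "P3 V E = (\<forall>u\<in>V. \<forall>v\<in>V. \<forall>w\<in>V. \<exists>t\<in>V. \<forall>z\<in>V.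
      E t z = (E u z \<noteq> (E v z \<noteq> (E w z \<noteq> (E u v \<noteq> (E u w \<noteq> E v w))))))"

lemma iso_P3:
  assumes iso: "graph_iso V E W F" and p: "P3 V E"
  shows "P3 W F"
proof -
  obtain h where bij: "bij_betw h V W" and e: "\<forall>i\<in>V. \<forall>j\<in>V. E i j \<longleftrightarrow> F (h i) (h j)"
    using iso unfolding graph_iso_def by blast
  define g where "g = inv_into V h"
  have g: "\<And>x. x \<in> W \<Longrightarrow> g x \<in> V \<and> h (g x) = x"
    unfolding g_def using bij
    by (metis bij_betw_imp_surj_on bij_betw_inv_into_right inv_into_into)
  have hV: "\<And>x. x \<in> V \<Longrightarrow> h x \<in> W" using bij bij_betwE by blast
  have Fe: "\<And>x y. x \<in> W \<Longrightarrow> y \<in> W \<Longrightarrow> F x y = E (g x) (g y)"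
    using g e by metis
  show ?thesis unfolding P3_def
  proof (intro ballI)
    fix u v w assume u: "u \<in> W" and v: "v \<in> W" and w: "w \<in> W"
    have gu: "g u \<in> V" "g v \<in> V" "g w \<in> V" using g u v w by auto
    have "\<exists>t\<in>V. \<forall>z\<in>V. E t z = (E (g u) z \<noteq> (E (g v) z \<noteq> (E (g w) z \<noteq> (E (g u) (g v) \<noteq> (E (g u) (g w) \<noteq> E (g v) (g w))))))"
      using p gu unfolding P3_def by blast
    then obtain t where t: "t \<in> V" and tz: "\<forall>z\<in>V. E t z = (E (g u) z \<noteq> (E (g v) z \<noteq> (E (g w) z \<noteq> (E (g u) (g v) \<noteq> (E (g u) (g w) \<noteq> E (g v) (g w))))))"
      by blast
    show "\<exists>t\<in>W. \<forall>z\<in>W. F t z = (F u z \<noteq> (F v z \<noteq> (F w z \<noteq> (F u v \<noteq> (F u w \<noteq> F v w)))))"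
    proof (intro bexI ballI)
      show "h t \<in> W" using hV t .
      fix z assume z: "z \<in> W"
      have "g (h t) = t"
        using bij t unfolding g_def by (simp add: bij_betw_inv_into_left)
      hence "F (h t) z = E t (g z)" using Fe[of "h t" z] hV t z by simp
      also have "\<dots> = (E (g u) (g z) \<noteq> (E (g v) (g z) \<noteq> (E (g w) (g z) \<noteq> (E (g u) (g v) \<noteq> (E (g u) (g w) \<noteq> E (g v) (g w))))))"
        using tz g z by blast
      also have "\<dots> = (F u z \<noteq> (F v z \<noteq> (F w z \<noteq> (F u v \<noteq> (F u w \<noteq> F v w)))))"
        using Fe u v w z by simp
      finally show "F (h t) z = (F u z \<noteq> (F v z \<noteq> (F w z \<noteq> (F u v \<noteq> (F u w \<noteq> F v w)))))" .
    qed
  qed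
qed

lemma xor_cancel_left: "xor a (xor a b) = (b::nat)"
  by (simp add: xor.assoc[symmetric])

lemma sig_P3: "P3 (vertices m) (cay_adj (sigma m))"
  unfolding P3_def vertices_def
proof (intro ballI)
  fix u v w :: nat assume u: "u \<in> {0..<4^m}" and v: "v \<in> {0..<4^m}" and w: "w \<in> {0..<4^m}"
  show "\<exists>t\<in>{0..<4^m}. \<forall>z\<in>{0..<4^m}. cay_adj (sigma m) t z = (cay_adj (sigma m) u z \<noteq> (cay_adj (sigma m) v z \<noteq> (cay_adj (sigma m) w z \<noteq> (cay_adj (sigma m) u v \<noteq> (cay_adj (sigma m) u w \<noteq> cay_adj (sigma m) v w)))))"
  proof (intro bexI ballI)
    show "xor (xor u v) w \<in> {0..<4^m}" using u v w by (simp add: xor_lt4)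
    fix z
    have e1: "xor (xor (xor u z) (xor v z)) (xor w z) = xor (xor (xor u v) w) z"
      by (simp add: xor.assoc xor.left_commute xor.commute xor_cancel_left)
    have e2: "xor (xor u z) (xor v z) = xor u v" "xor (xor u z) (xor w z) = xor u w" "xor (xor v z) (xor w z) = xor v w"
      by (simp_all add: xor.assoc xor.left_commute xor.commute xor_cancel_left)
    show "cay_adj (sigma m) (xor (xor u v) w) z = (cay_adj (sigma m) u z \<noteq> (cay_adj (sigma m) v z \<noteq> (cay_adj (sigma m) w z \<noteq> (cay_adj (sigma m) u v \<noteq> (cay_adj (sigma m) u w \<noteq> cay_adj (sigma m) v w)))))"
      using sig_quad[of m "xor u z" "xor v z" "xor w z"] unfolding e1 e2 xor.assoc[of "xor u v" w z, symmetric] cay_eq[of "sigma m", OF sigma0]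
      by argo
  qed
qed

lemma pow4_ge: "4 \<le> k \<Longrightarrow> (256::nat) \<le> 4 ^ k"
proof -
  assume "4 \<le> k"
  hence "(4::nat) ^ 4 \<le> 4 ^ k" by (rule power_increasing) simp
  thus ?thesis by simp
qed

lemma digit_high: "z < 256 \<Longrightarrow> 4 \<le> k \<Longrightarrow> digit4 z k = 0"
  unfolding digit4_def using pow4_ge[of k] by simp

lemma digit_low: "k < 4 \<Longrightarrow> digit4 (x mod 256) k = digit4 x k"
proof -
  assume "k < 4"
  hence "k = 0 \<or> k = 1 \<or> k = 2 \<or> k = 3" by auto
  moreover have "x mod 256 = take_bit 8 x" by (simp add: take_bit_eq_mod)
  ultimately show ?thesis
    by (auto simp: digit4_bits drop_bit_take_bit)
qed

lemma count_split:
  assumes z: "z < 256" and m: "4 \<le> m"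
  shows "count_digits m D (xor x z) = count_digits 4 D (xor (x mod 256) z) + card {k. 4 \<le> k \<and> k < m \<and> digit4 x k \<in> D}"
proof -
  have pt: "digit4 (xor x z) k \<in> D \<longleftrightarrow> (k < 4 \<and> digit4 (xor (x mod 256) z) k \<in> D) \<or> (4 \<le> k \<and> digit4 x k \<in> D)" for k
  proof (cases "k < 4")
    case True thus ?thesis by (simp add: digit4_xor digit_low)
  next
    case False thus ?thesis by (simp add: digit4_xor digit_high[OF z])
  qed
  have "{k. k < m \<and> digit4 (xor x z) k \<in> D} = {k. k < 4 \<and> digit4 (xor (x mod 256) z) k \<in> D} \<union> {k. 4 \<le> k \<and> k < m \<and> digit4 x k \<in> D}"
    using m pt by auto
  moreover have "{k. k < 4 \<and> digit4 (xor (x mod 256) z) k \<in> D} \<inter> {k. 4 \<le> k \<and> k < m \<and> digit4 x k \<in> D} = {}"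
    by auto
  ultimately show ?thesis unfolding count_digits_def
    by (simp add: card_Un_disjoint)
qed



lemma count_zero: "count_digits 0 D y = 0" by (simp add: count_digits_def)

lemma count4: "count_digits 4 D y = of_bool (digit4 y 0 \<in> D) + of_bool (digit4 y 1 \<in> D) + of_bool (digit4 y 2 \<in> D) + of_bool (digit4 y 3 \<in> D)"
  by (simp add: eval_nat_numeral count_Suc count_zero)

lemma tau_low: "y < 256 \<Longrightarrow> 4 \<le> m \<Longrightarrow> tau m y = tau 4 y"
  using count_split[of y m "{1,2}" 0] count_split[of y m "{1}" 0] unfolding tau_def by simp


definition Fc :: "nat \<Rightarrow> nat \<Rightarrow> nat \<Rightarrow> bool" where
  "Fc b c12 c1 = (if b = 0 then c12 \<noteq> 0 \<and> even c1 else if b = 1 then even c1 else odd c1)"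

definition cc :: "nat set \<Rightarrow> nat \<Rightarrow> nat \<Rightarrow> nat \<Rightarrow> nat \<Rightarrow> nat \<Rightarrow> nat" where
  "cc D d0 d1 d2 d3 z = of_bool (xor d0 (digit4 z 0) \<in> D) + of_bool (xor d1 (digit4 z 1) \<in> D)
     + of_bool (xor d2 (digit4 z 2) \<in> D) + of_bool (xor d3 (digit4 z 3) \<in> D)"

lemma b_cases: "(b::nat) < 3 \<Longrightarrow> b = 0 \<or> b = 1 \<or> b = 2" by auto

lemma core: "b < 3 \<Longrightarrow> d0 < 4 \<Longrightarrow> d1 < 4 \<Longrightarrow> d2 < 4 \<Longrightarrow> d3 < 4 \<Longrightarrow>
  \<exists>z\<in>{0,7,21,70,83}. \<not> Fc b (cc {1,2} d0 d1 d2 d3 z) (cc {1} d0 d1 d2 d3 z)"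
  apply (drule b_cases)
  apply (drule digit_cases)+
  apply (elim disjE)
  by (simp_all add: Fc_def cc_def digit4_def)

lemma cc_eq: "count_digits 4 D (xor lo z) = cc D (digit4 lo 0) (digit4 lo 1) (digit4 lo 2) (digit4 lo 3) z"
  unfolding count4 cc_def digit4_xor ..

lemma tv: "\<not> tau 4 0" "\<not> tau 4 1" "\<not> tau 4 3" "\<not> tau 4 4" "tau 4 5" "\<not> tau 4 6" "\<not> tau 4 7"
  "tau 4 17" "tau 4 20" "\<not> tau 4 21" "\<not> tau 4 66" "tau 4 70" "tau 4 71" "tau 4 82" "tau 4 83" "\<not> tau 4 87"
  by (simp_all add: tau_def count4 digit4_def)
lemma xv: "xor 1 (0::nat) = 1" "xor 4 (0::nat) = 4" "xor 1 (7::nat) = 6" "xor 4 (7::nat) = 3"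
  "xor 1 (21::nat) = 20" "xor 4 (21::nat) = 17" "xor 1 (70::nat) = 71" "xor 4 (70::nat) = 66"
  "xor 1 (83::nat) = 82" "xor 4 (83::nat) = 87"
  by simp_all
lemma xv2: "xor 1 (4::nat) = 5" by simp
lemma Gm: assumes m: "4 \<le> m" shows "z \<in> {0,7,21,70,83} \<Longrightarrow> (tau m (xor 0 z) \<noteq> (tau m (xor 1 z) \<noteq> (tau m (xor 4 z) \<noteq> (tau m (xor 0 1) \<noteq> (tau m (xor 0 4) \<noteq> tau m (xor 1 4))))))"
proof -
  have e: "\<And>y. y < 256 \<Longrightarrow> tau m y = tau 4 y" using tau_low m by blast
  show "z \<in> {0,7,21,70,83} \<Longrightarrow> ?thesis"
  apply (simp only: insert_iff empty_iff)
  apply (elim disjE)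
  by (simp_all add: xv xv2 e tv) (simp_all add: tau_def count4 digit4_def)
qed

lemma tau_not_P3:
  assumes m: "4 \<le> m"
  shows "\<not> P3 (vertices m) (cay_adj (tau m))"
proof
  assume p: "P3 (vertices m) (cay_adj (tau m))"
  have big: "256 \<le> (4::nat) ^ m" using pow4_ge[OF m] .
  have inV: "y < 256 \<Longrightarrow> y \<in> vertices m" for y using big by (simp add: vertices_def)
  have "\<exists>t\<in>vertices m. \<forall>z\<in>vertices m. cay_adj (tau m) t z = (cay_adj (tau m) 0 z \<noteq> (cay_adj (tau m) 1 z \<noteq> (cay_adj (tau m) 4 z \<noteq> (cay_adj (tau m) 0 1 \<noteq> (cay_adj (tau m) 0 4 \<noteq> cay_adj (tau m) 1 4)))))"
    using p inV[of 0] inV[of 1] inV[of 4] unfolding P3_def by simp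
  then obtain t where tz: "\<And>z. z \<in> vertices m \<Longrightarrow> cay_adj (tau m) t z = (cay_adj (tau m) 0 z \<noteq> (cay_adj (tau m) 1 z \<noteq> (cay_adj (tau m) 4 z \<noteq> (cay_adj (tau m) 0 1 \<noteq> (cay_adj (tau m) 0 4 \<noteq> cay_adj (tau m) 1 4)))))"
    by blast
  define lo where "lo = t mod 256"
  define r12 where "r12 = card {k. 4 \<le> k \<and> k < m \<and> digit4 t k \<in> {1,2}}"
  define r1 where "r1 = card {k. 4 \<le> k \<and> k < m \<and> digit4 t k \<in> {1}}"
  have r: "r1 \<le> r12" unfolding r1_def r12_def
    by (rule card_mono) (auto intro: finite_subset[of _ "{..<m}"])
  define b where "b = (if r12 = 0 then 0 else if even r1 then 1 else (2::nat))"
  have b3: "b < 3" unfolding b_def by auto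
  have key: "cay_adj (tau m) t z = Fc b (count_digits 4 {1,2} (xor lo z)) (count_digits 4 {1} (xor lo z))"
    if z: "z < 256" for z
  proof -
    have c1: "count_digits m {1,2} (xor t z) = count_digits 4 {1,2} (xor lo z) + r12"
      unfolding lo_def r12_def by (rule count_split[OF z m])
    have c2: "count_digits m {1} (xor t z) = count_digits 4 {1} (xor lo z) + r1"
      unfolding lo_def r1_def by (rule count_split[OF z m])
    have "cay_adj (tau m) t z = tau m (xor t z)" by (simp add: cay_eq)
    also have "\<dots> = (count_digits 4 {1,2} (xor lo z) + r12 \<noteq> 0 \<and> even (count_digits 4 {1} (xor lo z) + r1))"
      unfolding tau_def c1 c2 ..
    also have "\<dots> = Fc b (count_digits 4 {1,2} (xor lo z)) (count_digits 4 {1} (xor lo z))"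
      using r unfolding Fc_def b_def by auto
    finally show ?thesis .
  qed
  have true: "Fc b (count_digits 4 {1,2} (xor lo z)) (count_digits 4 {1} (xor lo z))"
    if z: "z \<in> {0,7,21,70,83}" for z
  proof -
    have z256: "z < 256" using z by auto
    have x1: "xor 1 z < 256" "xor 4 z < 256" using z by auto
    have h: "tau m (xor t z) = (tau m (xor 0 z) \<noteq> (tau m (xor 1 z) \<noteq> (tau m (xor 4 z) \<noteq> (tau m (xor 0 1) \<noteq> (tau m (xor 0 4) \<noteq> tau m (xor 1 4))))))"
      using tz[OF inV[OF z256]] unfolding cay_eq[of "tau m", OF tau0] .
    have "cay_adj (tau m) t z" unfolding cay_eq[of "tau m", OF tau0] by (rule iffD2[OF h Gm[OF m z]])
    thus ?thesis using key[OF z256] by simp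
  qed
  have ex: "\<exists>z\<in>{0,7,21,70,83}. \<not> Fc b (count_digits 4 {1,2} (xor lo z)) (count_digits 4 {1} (xor lo z))"
    using core[OF b3 digit4_lt[of lo 0] digit4_lt[of lo 1] digit4_lt[of lo 2] digit4_lt[of lo 3]]
    unfolding cc_eq .
  then obtain z where zZ: "z \<in> {0,7,21,70,83}" and nf: "\<not> Fc b (count_digits 4 {1,2} (xor lo z)) (count_digits 4 {1} (xor lo z))"
    by (rule bexE)
  show False using nf true[OF zZ] by (rule notE)
qed



lemma count_zero': "count_digits 0 D y = 0" by (simp add: count_digits_def)

lemma count1: "count_digits 1 D y = of_bool (digit4 y 0 \<in> D)"
  by (simp add: eval_nat_numeral count_Suc count_zero')
lemma count1': "count_digits (Suc 0) D y = of_bool (digit4 y 0 \<in> D)"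
  using count1 by simp
lemma count2: "count_digits 2 D y = of_bool (digit4 y 0 \<in> D) + of_bool (digit4 y 1 \<in> D)"
  by (simp add: eval_nat_numeral count_Suc count_zero')
lemma count3: "count_digits 3 D y = of_bool (digit4 y 0 \<in> D) + of_bool (digit4 y 1 \<in> D) + of_bool (digit4 y 2 \<in> D)"
  by (simp add: eval_nat_numeral count_Suc count_zero')

lemma list_bij:
  assumes d: "distinct H" and l: "length H = n" and s: "set H \<subseteq> {0..<n}"
  shows "bij_betw ((!) H) {0..<n} {0..<n}"
proof -
  have "card (set H) = n" using distinct_card[OF d] l by simp
  hence "set H = {0..<n}" using s by (intro card_subset_eq) auto
  thus ?thesis using bij_betw_nth[OF d] l by (simp add: atLeast0LessThan)
qed

lemma iso_of:
  assumes b: "bij_betw ((!) H) {0..<4^m} {0..<4^m}"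
    and e: "\<And>i j. i < 4^m \<Longrightarrow> j < 4^m \<Longrightarrow> sigma m (xor i j) = tau m (xor (H!i) (H!j))"
  shows "graph_iso (vertices m) (cay_adj (sigma m)) (vertices m) (cay_adj (tau m))"
  unfolding graph_iso_def vertices_def
proof (intro exI conjI)
  show "bij_betw ((!) H) {0..<4^m} {0..<4^m}" by fact
  show "\<forall>i\<in>{0..<4 ^ m}. \<forall>j\<in>{0..<4 ^ m}. cay_adj (sigma m) i j = cay_adj (tau m) (H ! i) (H ! j)"
    using e by (simp add: cay_eq[of "sigma m", OF sigma0] cay_eq[of "tau m", OF tau0])
qed

definition H1 :: "nat list" where "H1 = [0, 2, 1, 3]"
definition H2 :: "nat list" where "H2 = [0, 2, 1, 3, 11, 9, 10, 8, 7, 5, 6, 4, 12, 14, 13, 15]"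
definition H3 :: "nat list" where "H3 = [0, 2, 1, 3, 11, 57, 58, 8, 7, 53, 54, 4, 12, 14, 13, 15, 47, 33, 34, 44, 39, 25, 26, 36, 43, 21, 22, 40, 35, 45, 46, 32, 31, 17, 18, 28, 23, 41, 42, 20, 27, 37, 38, 24, 19, 29, 30, 16, 48, 50, 49, 51, 59, 9, 10, 56, 55, 5, 6, 52, 60, 62, 61, 63]"

lemma dec1: "(i::nat) < 4 \<Longrightarrow> \<exists>a0. a0 < 4 \<and> i = a0" by auto
lemma dec2: "(i::nat) < 16 \<Longrightarrow> \<exists>a0 a1. a0 < 4 \<and> a1 < 4 \<and> i = a0 + 4*a1"
proof -
  assume i: "i < 16"
  have "i = i mod 4 + 4 * (i div 4)" by simp
  moreover have "i div 4 < 4" using i by (simp add: div_less_iff_less_mult)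
  ultimately show ?thesis by (intro exI[of _ "i mod 4"] exI[of _ "i div 4"]) simp
qed
lemma dec3: "(i::nat) < 64 \<Longrightarrow> \<exists>a0 a1 a2. a0 < 4 \<and> a1 < 4 \<and> a2 < 4 \<and> i = a0 + 4*a1 + 16*a2"
proof -
  assume i: "i < 64"
  have e1: "i = i mod 4 + 4 * (i div 4)" by simp
  have e2: "i div 4 = i div 4 mod 4 + 4 * (i div 4 div 4)" by simp
  have e3: "i div 4 div 4 = i div 16" by (simp add: div_mult2_eq[symmetric])
  have "i = i mod 4 + 4 * (i div 4 mod 4) + 16 * (i div 16)" using e1 e2 e3 by linarith
  moreover have "i div 16 < 4" using i by (simp add: div_less_iff_less_mult)
  ultimately show ?thesis by (intro exI[of _ "i mod 4"] exI[of _ "i div 4 mod 4"] exI[of _ "i div 16"]) simp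
qed

lemma row1: "a0<4 \<Longrightarrow> b0 < 4 \<Longrightarrow> sigma 1 (xor a0 b0) = tau 1 (xor (H1!a0) (H1!b0))"
  apply (drule digit_cases)+
  apply (elim disjE)
  by (simp_all add: sigma_def tau_def count1 count1' digit4_def H1_def)

lemma row2: "a0<4 \<Longrightarrow> a1<4 \<Longrightarrow> b0 < 4 \<Longrightarrow> b1 < 4 \<Longrightarrow>
  sigma 2 (xor (a0+4*a1) (b0+4*b1)) = tau 2 (xor (H2!(a0+4*a1)) (H2!(b0+4*b1)))"
  apply (drule digit_cases)+
  apply (elim disjE)
  by (simp_all add: sigma_def tau_def count2 digit4_def H2_def)

definition c3 :: "nat set \<Rightarrow> nat \<Rightarrow> nat" where
 "c3 D i = of_bool (i mod 4 \<in> D) + of_bool (i div 4 mod 4 \<in> D) + of_bool (i div 16 mod 4 \<in> D)"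
definition sg3 where "sg3 i = odd (c3 {1} i)"
definition tg3 where "tg3 i = (c3 {1,2} i \<noteq> 0 \<and> even (c3 {1} i))"

lemma c3_eq: "count_digits 3 D y = c3 D y"
  unfolding count3 c3_def by (simp add: digit4_def)
lemma sg3_eq: "sigma 3 y = sg3 y" unfolding sigma_def sg3_def c3_eq ..
lemma tg3_eq: "tau 3 y = tg3 y" unfolding tau_def tg3_def c3_eq ..

lemma row3':"a0<4 \<Longrightarrow> a1<4 \<Longrightarrow> a2 < 4 \<Longrightarrow> b0 < 4 \<Longrightarrow> b1 < 4 \<Longrightarrow> b2 < 4 \<Longrightarrow>
  sg3 (xor (a0+4*a1+16*a2) (b0+4*b1+16*b2)) = tg3 (xor (H3!(a0+4*a1+16*a2)) (H3!(b0+4*b1+16*b2)))"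
  apply (drule digit_cases)+
  apply (elim disjE)
  by (simp_all add: sg3_def tg3_def c3_def H3_def)

lemma row3: "a0<4 \<Longrightarrow> a1<4 \<Longrightarrow> a2 < 4 \<Longrightarrow> b0 < 4 \<Longrightarrow> b1 < 4 \<Longrightarrow> b2 < 4 \<Longrightarrow>
  sigma 3 (xor (a0+4*a1+16*a2) (b0+4*b1+16*b2)) = tau 3 (xor (H3!(a0+4*a1+16*a2)) (H3!(b0+4*b1+16*b2)))"
  unfolding sg3_eq tg3_eq by (rule row3')

lemma iso1: "graph_iso (vertices 1) (cay_adj (sigma 1)) (vertices 1) (cay_adj (tau 1))"
proof (rule iso_of)
  show "bij_betw ((!) H1) {0..<4^1} {0..<4^1}" by (rule list_bij) (simp_all add: H1_def)
  fix i j :: nat assume "i < 4^1" "j < 4^1"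
  thus "sigma 1 (xor i j) = tau 1 (xor (H1!i) (H1!j))" using row1 by simp
qed

lemma iso2: "graph_iso (vertices 2) (cay_adj (sigma 2)) (vertices 2) (cay_adj (tau 2))"
proof (rule iso_of)
  show "bij_betw ((!) H2) {0..<4^2} {0..<4^2}" by (rule list_bij) (simp_all add: H2_def)
  fix i j :: nat assume "i < 4^2" "j < 4^2"
  then obtain a0 a1 b0 b1 where "a0 < 4" "a1 < 4" "b0 < 4" "b1 < 4" "i = a0 + 4*a1" "j = b0 + 4*b1"
    using dec2[of i] dec2[of j] by auto
  thus "sigma 2 (xor i j) = tau 2 (xor (H2!i) (H2!j))" using row2 by simp
qed

lemma iso3: "graph_iso (vertices 3) (cay_adj (sigma 3)) (vertices 3) (cay_adj (tau 3))"
proof (rule iso_of)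
  show "bij_betw ((!) H3) {0..<4^3} {0..<4^3}" by (rule list_bij) (simp_all add: H3_def)
  fix i j :: nat assume "i < 4^3" "j < 4^3"
  then obtain a0 a1 a2 b0 b1 b2 where "a0 < 4" "a1 < 4" "a2 < 4" "b0 < 4" "b1 < 4" "b2 < 4"
     "i = a0 + 4*a1 + 16*a2" "j = b0 + 4*b1 + 16*b2"
    using dec3[of i] dec3[of j] by auto
  thus "sigma 3 (xor i j) = tau 3 (xor (H3!i) (H3!j))" using row3 by simp
qed


theorem theorem1:
  fixes m :: nat
  assumes "m \<ge> 1"
  shows "graph_iso (vertices m) (cay_adj (sigma m)) (vertices m) (cay_adj (tau m))
         \<longleftrightarrow> m \<in> {1, 2, 3}"
proof
  assume iso: "graph_iso (vertices m) (cay_adj (sigma m)) (vertices m) (cay_adj (tau m))"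
  have "P3 (vertices m) (cay_adj (tau m))" using iso_P3[OF iso sig_P3] .
  hence "\<not> 4 \<le> m" using tau_not_P3 by blast
  thus "m \<in> {1, 2, 3}" using assms by auto
next
  assume "m \<in> {1, 2, 3}"
  thus "graph_iso (vertices m) (cay_adj (sigma m)) (vertices m) (cay_adj (tau m))"
    using iso1 iso2 iso3 by auto
qed

end
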